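(* Let $S\subseteq\mathbb{R}^{n-1}$ and let $P\in\mathbb{R}[\mathbf{x};x_n]$ have degree $d_n$ in $x_n$, $P=\sum_{k=0}^{d_n}c_k(\mathbf{x})x_n^k$. (1) If $c_{d_n}$ does not vanish at any point of $S$, then $P$ is projectively delineable on $S$ if and only if $P$ is delineable on $S$. (2) If $S$ is connected, $c_{d_n}$ vanishes identically on $S$, and $P$ is projectively delineable on $S$, then $P$ is delineable on $S$.
   Context: Write $\mathbf{x}=(x_1,\dots,x_{n-1})$; $E_{\mathbf{x}_0}P$ is the univariate polynomial in $x_n$ obtained by substituting $\mathbf{x}_0$ for $\mathbf{x}$. $\mathbb{RP}^1$ is the quotient of $\mathbb{R}^2\setminus\{(0,0)\}$ by proportionality with the quotient topology; $(u:v)$ is the class of $(u,v)$; $\infty=(1:0)$. With $d=\deg_{x_n}P$, $H^d(P)(\mathbf{x},x_n,y)=\sum_kc_k(\mathbf{x})x_n^ky^{d-k}$. A projective root of a binary form $g(u,v)$ is $(u_0:v_0)$ with $g(u_0,v_0)=0$, with multiplicity (for $g\ne0$) the largest $m$ such that $(v_0u-u_0v)^m$ divides $g$; projective roots of $E_{\mathbf{x}}P$ w.r.t. $d$ are those of $E_{\mathbf{x}}H^d(P)$. $Z_{\mathbb{R}}(P,S)=\{(\mathbf{x},x_n)\in S\times\mathbb{R}:P(\mathbf{x},x_n)=0\}$, $Z_{\mathbb{RP}^1}(P,S)=\{(\mathbf{x},(x_n:y))\in S\times\mathbb{RP}^1:H^d(P)(\mathbf{x},x_n,y)=0\}$. $P$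 is delineable on $S$ if there are $k\in\mathbb{N}$ and continuous $\theta_1,\dots,\theta_k:S\to\mathbb{R}$ with $Z_{\mathbb{R}}(P,S)$ the disjoint union of their graphs and, for each $l$, an $m_l\ge1$ such that $\theta_l(\mathbf{x})$ is a root of $E_{\mathbf{x}}P$ of multiplicity $m_l$ for all $\mathbf{x}\in S$. $P$ is projectively delineable on $S$ if there are $k\in\mathbb{N}$ and continuous $\theta_1,\dots,\theta_k:S\to\mathbb{RP}^1$ with $Z_{\mathbb{RP}^1}(P,S)$ the disjoint union of their graphs and, for each $l$, an $m_l\ge1$ such that $\theta_l(\mathbf{x})$ is a projective root of $E_{\mathbf{x}}P$ (w.r.t. $d$) of multiplicity $m_l$ for all $\mathbf{x}\in S$. *)

theory Defs
  imports "HOL-Analysis.Analysis" "HOL-Computational_Algebra.Polynomial"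
begin

text \<open>Real polynomial functions on R^(n-1) (= real multivariate polynomials, since R is infinite).
  The index type 'm plays the role of {1..n-1}.\<close>
inductive real_poly_fun :: "(real^'m \<Rightarrow> real) \<Rightarrow> bool" where
  const: "real_poly_fun (\<lambda>x. a)"
| coord: "real_poly_fun (\<lambda>x. x $ i)"
| add: "real_poly_fun f \<Longrightarrow> real_poly_fun g \<Longrightarrow> real_poly_fun (\<lambda>x. f x + g x)"
| mult: "real_poly_fun f \<Longrightarrow> real_poly_fun g \<Longrightarrow> real_poly_fun (\<lambda>x. f x * g x)"

text \<open>A polynomial P in R[x; x_n] is given by its coefficient family c, P = sum_k c_k(x) x_n^k,
  where every c_k is a polynomial function and only finitely many c_k are nonzero.\<close>
definition is_poly_xn :: "(nat \<Rightarrow> real^'m \<Rightarrow> real) \<Rightarrow> bool" where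
  "is_poly_xn c \<longleftrightarrow> (\<forall>k. real_poly_fun (c k)) \<and> finite {k. c k \<noteq> (\<lambda>_. 0)}"

definition deg_xn :: "(nat \<Rightarrow> real^'m \<Rightarrow> real) \<Rightarrow> nat" where
  "deg_xn c = (if \<exists>k. c k \<noteq> (\<lambda>_. 0) then Max {k. c k \<noteq> (\<lambda>_. 0)} else 0)"

definition evalP :: "(nat \<Rightarrow> real^'m \<Rightarrow> real) \<Rightarrow> real^'m \<Rightarrow> real poly" where
  "evalP c x = Poly (map (\<lambda>k. c k x) [0..<Suc (deg_xn c)])"

text \<open>Bivariate polynomials in (u,v) are represented as real poly poly: outer variable u,
  inner variable v.\<close>
definition bf_eval :: "real poly poly \<Rightarrow> real \<Rightarrow> real \<Rightarrow> real" where
  "bf_eval g u v = poly (poly g [:u:]) v"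

text \<open>E_x H^d(P)(x, u, v) = sum_k c_k(x) u^k v^(d-k) with d = deg_{x_n} P.\<close>
definition homog :: "(nat \<Rightarrow> real^'m \<Rightarrow> real) \<Rightarrow> real^'m \<Rightarrow> real poly poly" where
  "homog c x = (\<Sum>k\<le>deg_xn c. monom (monom (c k x) (deg_xn c - k)) k)"

text \<open>The linear form v0*u - u0*v.\<close>
definition lin_form :: "real \<Rightarrow> real \<Rightarrow> real poly poly" where
  "lin_form u0 v0 = [: [:0, - u0:], [:v0:] :]"

text \<open>Points of RP^1 are represented as the proportionality classes themselves.\<close>
definition proj_class :: "real \<times> real \<Rightarrow> (real \<times> real) set" where
  "proj_class p = {(t * fst p, t * snd p) | t. t \<noteq> 0}"

definition RP1 :: "(real \<times> real) set set" where
  "RP1 = proj_class ` (UNIV - {(0, 0)})"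

definition proj_inf :: "(real \<times> real) set" where
  "proj_inf = proj_class (1, 0)"

text \<open>Quotient topology on RP^1 from R^2 minus the origin (which is open in R^2).\<close>
definition RP1_top :: "(real \<times> real) set topology" where
  "RP1_top = topology (\<lambda>U. U \<subseteq> RP1 \<and> open {p. p \<noteq> (0, 0) \<and> proj_class p \<in> U})"

lemma istopology_RP1: "istopology (\<lambda>U. U \<subseteq> RP1 \<and> open {p. p \<noteq> (0, 0) \<and> proj_class p \<in> U})"
proof -
  have 1: "{p. p \<noteq> (0, 0) \<and> proj_class p \<in> S \<inter> T} =
           {p. p \<noteq> (0, 0) \<and> proj_class p \<in> S} \<inter> {p. p \<noteq> (0, 0) \<and> proj_class p \<in> T}" for S T
    by auto
  have 2: "{p. p \<noteq> (0, 0) \<and> proj_class p \<in> \<Union>K} =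
           (\<Union>U\<in>K. {p. p \<noteq> (0, 0) \<and> proj_class p \<in> U})" for K
    by auto
  show ?thesis
    unfolding istopology_def 1 2 by auto
qed

definition proj_root_mult :: "real poly poly \<Rightarrow> (real \<times> real) set \<Rightarrow> nat \<Rightarrow> bool" where
  "proj_root_mult g p m \<longleftrightarrow> (\<exists>u0 v0. (u0, v0) \<noteq> (0, 0) \<and> p = proj_class (u0, v0) \<and>
      g \<noteq> 0 \<and> bf_eval g u0 v0 = 0 \<and>
      lin_form u0 v0 ^ m dvd g \<and> (\<forall>m'. lin_form u0 v0 ^ m' dvd g \<longrightarrow> m' \<le> m))"

definition root_mult :: "real poly \<Rightarrow> real \<Rightarrow> nat \<Rightarrow> bool" where
  "root_mult q a m \<longleftrightarrow> q \<noteq> 0 \<and> poly q a = 0 \<and> order a q = m"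

definition Z_R :: "(nat \<Rightarrow> real^'m \<Rightarrow> real) \<Rightarrow> (real^'m) set \<Rightarrow> ((real^'m) \<times> real) set" where
  "Z_R c S = {(x, t). x \<in> S \<and> poly (evalP c x) t = 0}"

definition Z_RP1 :: "(nat \<Rightarrow> real^'m \<Rightarrow> real) \<Rightarrow> (real^'m) set \<Rightarrow> ((real^'m) \<times> (real \<times> real) set) set" where
  "Z_RP1 c S = {(x, proj_class (a, b)) | x a b. x \<in> S \<and> (a, b) \<noteq> (0, 0) \<and> bf_eval (homog c x) a b = 0}"

definition delineable :: "(nat \<Rightarrow> real^'m \<Rightarrow> real) \<Rightarrow> (real^'m) set \<Rightarrow> bool" where
  "delineable c S \<longleftrightarrow> (\<exists>(k::nat) (\<theta>::nat \<Rightarrow> real^'m \<Rightarrow> real).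
      (\<forall>l<k. continuous_on S (\<theta> l)) \<and>
      Z_R c S = {(x, \<theta> l x) | x l. x \<in> S \<and> l < k} \<and>
      (\<forall>x\<in>S. \<forall>i<k. \<forall>j<k. i \<noteq> j \<longrightarrow> \<theta> i x \<noteq> \<theta> j x) \<and>
      (\<forall>l<k. \<exists>m\<ge>1. \<forall>x\<in>S. root_mult (evalP c x) (\<theta> l x) m))"

definition proj_delineable :: "(nat \<Rightarrow> real^'m \<Rightarrow> real) \<Rightarrow> (real^'m) set \<Rightarrow> bool" where
  "proj_delineable c S \<longleftrightarrow> (\<exists>(k::nat) (\<theta>::nat \<Rightarrow> real^'m \<Rightarrow> (real \<times> real) set).
      (\<forall>l<k. continuous_map (top_of_set S) RP1_top (\<theta> l)) \<and>
      Z_RP1 c S = {(x, \<theta> l x) | x l. x \<in> S \<and> l < k} \<and>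
      (\<forall>x\<in>S. \<forall>i<k. \<forall>j<k. i \<noteq> j \<longrightarrow> \<theta> i x \<noteq> \<theta> j x) \<and>
      (\<forall>l<k. \<exists>m\<ge>1. \<forall>x\<in>S. proj_root_mult (homog c x) (\<theta> l x) m))"

end

theory Submission
  imports Defs
begin


lemma pcompose_monom_gen: "pcompose (monom a k) r = smult a (r ^ k)"
proof -
  have "pcompose ([:0,1:]^k) r = r ^ k" for k
    by (induct k) (simp_all add: pcompose_mult pcompose_1 pcompose_pCons)
  then show ?thesis by (simp add: monom_altdef pcompose_smult)
qed

lemma coeff_lin_pow:
  fixes b :: "'a::comm_ring_1"
  shows "coeff ([:b,1:] ^ k) j = of_nat (k choose j) * b ^ (k - j)"
proof (cases "j \<le> k")
  case True then show ?thesis by (simp add: coeff_linear_poly_power)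
next
  case False
  have "degree ([:b,1:] ^ k) \<le> k * 1"
    by (rule order.trans[OF degree_power_le]) simp
  with False show ?thesis by (simp add: coeff_eq_0 binomial_eq_0)
qed

lemma coeff_pcompose_shift:
  fixes p :: "'a::comm_ring_1 poly"
  assumes "degree p \<le> N"
  shows "coeff (pcompose p [:b,1:]) j = (\<Sum>k\<le>N. coeff p k * (of_nat (k choose j) * b ^ (k - j)))"
proof -
  have "pcompose p [:b,1:] = pcompose (\<Sum>k\<le>N. monom (coeff p k) k) [:b,1:]"
    using poly_as_sum_of_monoms'[OF assms] by simp
  also have "\<dots> = (\<Sum>k\<le>N. smult (coeff p k) ([:b,1:] ^ k))"
    by (simp add: pcompose_sum pcompose_monom_gen)
  finally show ?thesis by (simp add: coeff_sum coeff_lin_pow)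
qed

lemma shift_dvd_iff:
  fixes p :: "'a::comm_ring_1 poly"
  shows "[:-b,1:]^m dvd p \<longleftrightarrow> (\<forall>j<m. coeff (pcompose p [:b,1:]) j = 0)"
proof -
  have e1: "pcompose [:-b,1:] [:b,1:] = [:0,1:]"
    by (simp add: pcompose_pCons)
  have e2: "pcompose [:b,1:] [:-b,1:] = [:0,1:]"
    by (simp add: pcompose_pCons)
  have pw: "pcompose (q ^ n) r = pcompose q r ^ n" for q r :: "'a poly" and n
    by (induct n) (simp_all add: pcompose_mult pcompose_1)
  have "[:-b,1:]^m dvd p \<longleftrightarrow> [:0,1:]^m dvd pcompose p [:b,1:]"
  proof
    assume "[:-b,1:]^m dvd p"
    then obtain h where "p = [:-b,1:]^m * h" by (auto elim: dvdE)
    then have "pcompose p [:b,1:] = [:0,1:]^m * pcompose h [:b,1:]"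
      by (simp add: pcompose_mult pw e1)
    then show "[:0,1:]^m dvd pcompose p [:b,1:]" by simp
  next
    assume "[:0,1:]^m dvd pcompose p [:b,1:]"
    then obtain h where h: "pcompose p [:b,1:] = [:0,1:]^m * h" by (auto elim: dvdE)
    have "p = pcompose (pcompose p [:b,1:]) [:-b,1:]"
      by (simp add: pcompose_assoc[symmetric] e2)
    also have "\<dots> = [:-b,1:]^m * pcompose h [:-b,1:]"
      by (simp add: h pcompose_mult pw pcompose_pCons)
    finally show "[:-b,1:]^m dvd p" by (metis dvd_triv_left)
  qed
  also have "\<dots> \<longleftrightarrow> (\<forall>j<m. coeff (pcompose p [:b,1:]) j = 0)"
    using monom_1_dvd_iff'[of m] by (simp add: monom_altdef)
  finally show ?thesis .
qed



lemma coeff_q: "coeff (evalP c x) k = (if k \<le> deg_xn c then c k x else 0)"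
  by (auto simp: evalP_def nth_default_def simp del: upt_Suc)

lemma q_sum: "evalP c x = (\<Sum>k\<le>deg_xn c. monom (c k x) k)"
  by (rule poly_eqI) (simp add: coeff_q coeff_sum coeff_monom)

lemma poly_q: "poly (evalP c x) t = (\<Sum>k\<le>deg_xn c. c k x * t ^ k)"
  by (simp add: q_sum poly_sum poly_monom)

lemma deg_q: "degree (evalP c x) \<le> deg_xn c"
  by (rule degree_le) (simp add: coeff_q)

lemma coeff_g: "coeff (homog c x) k = (if k \<le> deg_xn c then monom (c k x) (deg_xn c - k) else 0)"
  by (simp add: homog_def coeff_sum coeff_monom)

lemma deg_g: "degree (homog c x) \<le> deg_xn c"
  by (rule degree_le) (simp add: coeff_g)

lemma bf_g: "bf_eval (homog c x) a b = (\<Sum>k\<le>deg_xn c. c k x * a ^ k * b ^ (deg_xn c - k))"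
  by (simp add: bf_eval_def homog_def poly_sum poly_monom poly_const_pow mult_ac)

lemma g0: "homog c x = 0 \<longleftrightarrow> evalP c x = 0"
proof
  assume "homog c x = 0"
  then have "\<forall>k. coeff (homog c x) k = 0" by simp
  then have "\<forall>k. coeff (evalP c x) k = 0" 
    by (simp add: coeff_g coeff_q) (metis monom_eq_0_iff)
  then show "evalP c x = 0" by (simp add: poly_eq_iff)
next
  assume "evalP c x = 0"
  then have "\<forall>k. coeff (evalP c x) k = 0" by simp
  then have "\<forall>k. coeff (homog c x) k = 0" 
    by (simp add: coeff_g coeff_q) metis
  then show "homog c x = 0" by (simp add: poly_eq_iff)
qed

lemma bf_r1: "bf_eval (homog c x) r 1 = poly (evalP c x) r"
  by (simp add: bf_g poly_q)

lemma bf_inf: "bf_eval (homog c x) a 0 = c (deg_xn c) x * a ^ deg_xn c"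
proof -
  have "(\<Sum>k\<le>deg_xn c. c k x * a ^ k * (0::real) ^ (deg_xn c - k))
      = (\<Sum>k\<in>{deg_xn c}. c k x * a ^ k * (0::real) ^ (deg_xn c - k))"
    by (rule sum.mono_neutral_right) auto
  then show ?thesis by (simp add: bf_g)
qed

lemma bf_scale: "bf_eval (homog c x) (t*a) (t*b) = t ^ deg_xn c * bf_eval (homog c x) a b"
proof -
  have "c k x * (t*a) ^ k * (t*b) ^ (deg_xn c - k) = t ^ deg_xn c * (c k x * a ^ k * b ^ (deg_xn c - k))"
    if "k \<le> deg_xn c" for k
  proof -
    have "t ^ k * t ^ (deg_xn c - k) = t ^ deg_xn c" using that by (simp add: power_add[symmetric])
    then show ?thesis by (simp add: power_mult_distrib)
  qed
  then show ?thesis unfolding bf_g sum_distrib_left by (intro sum.cong) auto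
qed

lemma lin_dvd: "lin_form r 1 ^ m dvd homog c x \<longleftrightarrow> [:-r,1:]^m dvd evalP c x"
proof -
  define d where "d = deg_xn c"
  define T where "T j = (\<Sum>k\<le>d. c k x * (of_nat (k choose j) * r ^ (k - j)))" for j
  have L: "lin_form r 1 = [:-[:0,r:], 1:]" by (simp add: lin_form_def one_pCons)
  have C1: "coeff (pcompose (homog c x) [:[:0,r:],1:]) j = monom (T j) (d - j)" for j
  proof -
    have "coeff (pcompose (homog c x) [:[:0,r:],1:]) j
        = (\<Sum>k\<le>d. coeff (homog c x) k * (of_nat (k choose j) * [:0,r:] ^ (k - j)))"
      by (rule coeff_pcompose_shift) (simp add: deg_g d_def)
    also have "\<dots> = (\<Sum>k\<le>d. monom (c k x * (of_nat (k choose j) * r ^ (k - j))) (d - j))"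
    proof (rule sum.cong[OF refl])
      fix k assume k: "k \<in> {..d}"
      show "coeff (homog c x) k * (of_nat (k choose j) * [:0, r:] ^ (k - j)) =
          monom (c k x * (of_nat (k choose j) * r ^ (k - j))) (d - j)"
      proof (cases "j \<le> k")
        case True
        have "[:0, r:] = monom r 1" by (simp add: monom_altdef)
        then have "[:0, r:] ^ (k - j) = monom (r ^ (k-j)) (k - j)"
          by (simp add: monom_power)
        moreover have "d - k + (k - j) = d - j" using True k by auto
        then have "monom (c k x) (d-k) * monom (real (k choose j) * r^(k-j)) (k-j) = monom (c k x * (real (k choose j) * r^(k-j))) (d-j)"
          by (simp add: mult_monom)
        ultimately show ?thesis using k
          by (simp add: coeff_g d_def[symmetric] of_nat_poly smult_monom mult_ac)
      next
        case False then show ?thesis by (simp add: binomial_eq_0)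
      qed
    qed
    also have "\<dots> = monom (T j) (d - j)" by (simp add: T_def monom_sum)
    finally show ?thesis .
  qed
  have C2: "coeff (pcompose (evalP c x) [:r,1:]) j = T j" for j
    unfolding T_def by (subst coeff_pcompose_shift[OF deg_q]) (simp add: coeff_q d_def)
  show ?thesis
    unfolding L shift_dvd_iff C1 C2 by simp
qed



lemma proj_self: "(a,b) \<in> proj_class (a,b)"
  unfolding proj_class_def by (auto intro!: exI[of _ 1])

lemma proj_eqD: "proj_class (a,b) = proj_class (a',b') \<Longrightarrow> \<exists>t. t \<noteq> 0 \<and> a = t*a' \<and> b = t*b'"
  using proj_self[of a b] unfolding proj_class_def by auto

lemma proj_scale: "t \<noteq> 0 \<Longrightarrow> proj_class (t*a, t*b) = proj_class (a,b)"
proof (rule set_eqI, rule iffI)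
  fix p assume "t \<noteq> 0" "p \<in> proj_class (t*a,t*b)"
  then obtain s where s: "s \<noteq> 0" "p = (s*(t*a), s*(t*b))" unfolding proj_class_def by auto
  then have "p = ((s*t)*a, (s*t)*b) \<and> s*t \<noteq> 0" using \<open>t \<noteq> 0\<close> by (simp add: mult.assoc)
  then show "p \<in> proj_class (a,b)" unfolding proj_class_def by auto
next
  fix p assume "t \<noteq> 0" "p \<in> proj_class (a,b)"
  then obtain s where s: "s \<noteq> 0" "p = (s*a, s*b)" unfolding proj_class_def by auto
  then have "p = ((s/t)*(t*a), (s/t)*(t*b)) \<and> s/t \<noteq> 0" using \<open>t \<noteq> 0\<close> by simp
  then show "p \<in> proj_class (t*a,t*b)" unfolding proj_class_def mem_Collect_eq fst_conv snd_conv by blast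
qed

lemma proj_norm: "b \<noteq> 0 \<Longrightarrow> proj_class (a,b) = proj_class (a/b,1)"
  using proj_scale[of b "a/b" 1] by simp

lemma proj_r1_inj: "proj_class (r,1) = proj_class (r',1) \<Longrightarrow> r = r'"
  using proj_eqD[of r 1 r' 1] by auto

lemma proj_inf_iff: "(a,b) \<noteq> (0,0) \<Longrightarrow> proj_class (a,b) = proj_inf \<longleftrightarrow> b = 0"
proof
  assume "proj_class (a,b) = proj_inf" then show "b = 0"
    unfolding proj_inf_def using proj_eqD[of a b 1 0] by auto
next
  assume "(a,b) \<noteq> (0,0)" "b = 0"
  then show "proj_class (a,b) = proj_inf"
    unfolding proj_inf_def using proj_scale[of a 1 0] by simp
qed

lemma proj_r1_ne_inf: "proj_class (r,1) \<noteq> proj_inf"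
  using proj_inf_iff[of r 1] by simp

definition ratio :: "(real \<times> real) set \<Rightarrow> real" where
  "ratio P = (SOME r. P = proj_class (r,1))"

lemma ratio_eq: "P = proj_class (r,1) \<Longrightarrow> ratio P = r"
  unfolding ratio_def by (rule some_equality) (auto intro: proj_r1_inj)

lemma ZRP1_iff: "x \<in> S \<Longrightarrow> (a,b) \<noteq> (0,0) \<Longrightarrow>
  (x, proj_class (a,b)) \<in> Z_RP1 c S \<longleftrightarrow> bf_eval (homog c x) a b = 0"
proof
  assume "(x, proj_class (a,b)) \<in> Z_RP1 c S" "(a,b) \<noteq> (0,0)"
  then obtain a' b' where ab': "proj_class (a,b) = proj_class (a',b')" "bf_eval (homog c x) a' b' = 0"
    unfolding Z_RP1_def by auto
  then obtain t where "a = t*a'" "b = t*b'" using proj_eqD by blast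
  then show "bf_eval (homog c x) a b = 0" using ab' bf_scale[of c x t a' b'] by simp
next
  assume "x \<in> S" "(a,b) \<noteq> (0,0)" "bf_eval (homog c x) a b = 0"
  then show "(x, proj_class (a,b)) \<in> Z_RP1 c S" unfolding Z_RP1_def by auto
qed

lemma ZRP1_D: "(x,P) \<in> Z_RP1 c S \<Longrightarrow> x \<in> S \<and> (\<exists>a b. (a,b) \<noteq> (0,0) \<and> P = proj_class (a,b) \<and> bf_eval (homog c x) a b = 0)"
  unfolding Z_RP1_def by auto

lemma smult_unit_dvd: "c * c' = 1 \<Longrightarrow> smult c p dvd g \<longleftrightarrow> p dvd g"
proof
  assume cc: "c * c' = 1" and "smult c p dvd g"
  moreover have "p dvd smult c p" by (metis dvd_smult dvd_refl)
  ultimately show "p dvd g" using dvd_trans by blast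
next
  assume cc: "c * c' = 1" and "p dvd g"
  have "p = smult c p * [:c':]" using cc by (simp add: mult.commute)
  then have "smult c p dvd p" by (metis dvd_triv_left)
  then show "smult c p dvd g" using \<open>p dvd g\<close> dvd_trans by blast
qed

lemma lin_scale_dvd:
  assumes "t \<noteq> 0"
  shows "lin_form (t*r) t ^ n dvd g \<longleftrightarrow> lin_form r 1 ^ n dvd g"
proof -
  have "lin_form (t*r) t = smult [:t:] (lin_form r 1)" by (simp add: lin_form_def)
  then have e: "lin_form (t*r) t ^ n = smult ([:t:]^n) (lin_form r 1 ^ n)" by (simp add: smult_power)
  have "[:t:]^n * [:1/t:]^n = 1" using assms
    by (simp add: power_mult_distrib[symmetric] poly_const_pow one_pCons)
  then show ?thesis unfolding e by (rule smult_unit_dvd)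
qed

lemma mult_iff:
  assumes "m \<ge> 1"
  shows "proj_root_mult (homog c x) (proj_class (r,1)) m \<longleftrightarrow> root_mult (evalP c x) r m"
proof
  assume "proj_root_mult (homog c x) (proj_class (r,1)) m"
  then obtain u0 v0 where uv: "proj_class (r,1) = proj_class (u0,v0)" "homog c x \<noteq> 0"
     "lin_form u0 v0 ^ m dvd homog c x" "\<forall>m'. lin_form u0 v0 ^ m' dvd homog c x \<longrightarrow> m' \<le> m"
    unfolding proj_root_mult_def by blast
  from proj_eqD[OF uv(1)[symmetric]] obtain t where t: "t \<noteq> 0" "u0 = t*r" "v0 = t" by auto
  have D: "lin_form u0 v0 ^ n dvd homog c x \<longleftrightarrow> [:-r,1:]^n dvd evalP c x" for n
    using t lin_scale_dvd[of t r n] lin_dvd by simp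
  have q0: "evalP c x \<noteq> 0" using uv(2) g0[of c x] by simp
  have d1: "[:-r,1:]^m dvd evalP c x" using uv(3) D by simp
  have d2: "\<not> [:-r,1:]^Suc m dvd evalP c x" using uv(4) D by (metis Suc_n_not_le_n)
  have "order r (evalP c x) = m"
    by (rule order_unique_lemma[OF d1 d2])
  moreover have "poly (evalP c x) r = 0"
    using calculation assms q0 order_root by fastforce
  ultimately show "root_mult (evalP c x) r m" unfolding root_mult_def using q0 by simp
next
  assume "root_mult (evalP c x) r m"
  then have q: "evalP c x \<noteq> 0" "poly (evalP c x) r = 0" "order r (evalP c x) = m"
    unfolding root_mult_def by auto
  show "proj_root_mult (homog c x) (proj_class (r,1)) m"
    unfolding proj_root_mult_def
  proof (intro exI conjI allI impI)
    show "(r, 1::real) \<noteq> (0,0)" by simp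
    show "homog c x \<noteq> 0" using q g0[of c x] by simp
    show "bf_eval (homog c x) r 1 = 0" using q(2) bf_r1[of c x r] by simp
    show "lin_form r 1 ^ m dvd homog c x" using lin_dvd[of r m c x] order_1[of r "evalP c x"] q by simp
    fix m' assume "lin_form r 1 ^ m' dvd homog c x"
    then show "m' \<le> m" using lin_dvd[of r m' c x] q order_divides by metis
  qed simp
qed



lemma openin_RP1: "openin RP1_top U \<longleftrightarrow> U \<subseteq> RP1 \<and> open {p. p \<noteq> (0, 0) \<and> proj_class p \<in> U}"
  unfolding RP1_top_def topology_inverse'[OF istopology_RP1] by simp

lemma proj_in_RP1: "p \<noteq> (0,0) \<Longrightarrow> proj_class p \<in> RP1"
  unfolding RP1_def by auto

lemma topspace_RP1: "topspace RP1_top = RP1"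
proof -
  have "{p. p \<noteq> (0, 0) \<and> proj_class p \<in> RP1} = - {(0,0)}"
    using proj_in_RP1 by auto
  then have "openin RP1_top RP1" unfolding openin_RP1 by (simp add: open_Compl)
  then show ?thesis unfolding topspace_def by (auto simp: openin_RP1)
qed

lemma RP1_cases: "P \<in> RP1 \<Longrightarrow> P \<noteq> proj_inf \<Longrightarrow> P = proj_class (ratio P, 1)"
proof -
  assume "P \<in> RP1" "P \<noteq> proj_inf"
  then obtain a b where ab: "(a,b) \<noteq> (0,0)" "P = proj_class (a,b)" unfolding RP1_def by auto
  then have "b \<noteq> 0" using proj_inf_iff \<open>P \<noteq> proj_inf\<close> by auto
  then have "P = proj_class (a/b,1)" using ab proj_norm[of b a] by argo
  moreover have "ratio P = a/b" using calculation by (rule ratio_eq)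
  ultimately show ?thesis by simp
qed

lemma open_snd_ne: "open {p::real\<times>real. snd p \<noteq> 0}"
  by (intro open_Collect_neq continuous_intros)

lemma cont_T1:
  assumes "continuous_on S \<theta>"
  shows "continuous_map (top_of_set S) RP1_top (\<lambda>x. proj_class (\<theta> x, 1))"
  unfolding continuous_map_def topspace_RP1
proof (intro conjI allI impI)
  show "(\<lambda>x. proj_class (\<theta> x, 1)) \<in> topspace (top_of_set S) \<rightarrow> RP1" using proj_in_RP1 by auto
  fix U assume "openin RP1_top U"
  then have W: "open {p. p \<noteq> (0, 0) \<and> proj_class p \<in> U}" unfolding openin_RP1 by simp
  have c: "continuous_on S (\<lambda>x. (\<theta> x, 1::real))" using assms by (intro continuous_intros)
  have "{x \<in> topspace (top_of_set S). proj_class (\<theta> x, 1) \<in> U}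
     = S \<inter> (\<lambda>x. (\<theta> x, 1::real)) -` {p. p \<noteq> (0, 0) \<and> proj_class p \<in> U}" by auto
  then show "openin (top_of_set S) {x \<in> topspace (top_of_set S). proj_class (\<theta> x, 1) \<in> U}"
    using continuous_openin_preimage_gen[OF c W] by simp
qed

lemma cont_T3:
  assumes "continuous_map (top_of_set S) RP1_top \<Theta>"
  shows "openin (top_of_set S) {x \<in> S. \<Theta> x \<noteq> proj_inf}"
proof -
  have "{p. p \<noteq> (0, 0) \<and> proj_class p \<in> RP1 - {proj_inf}} = {p. snd p \<noteq> 0}"
  proof (rule set_eqI)
    fix p :: "real \<times> real"
    obtain a b where p: "p = (a,b)" by (cases p)
    show "p \<in> {p. p \<noteq> (0, 0) \<and> proj_class p \<in> RP1 - {proj_inf}} \<longleftrightarrow> p \<in> {p. snd p \<noteq> 0}"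
      unfolding p using proj_in_RP1[of "(a,b)"] proj_inf_iff[of a b] by auto
  qed
  then have "openin RP1_top (RP1 - {proj_inf})" unfolding openin_RP1 using open_snd_ne by simp
  then have "openin (top_of_set S) {x \<in> S. \<Theta> x \<in> RP1 - {proj_inf}}"
    using assms unfolding continuous_map_def by auto
  moreover have "{x \<in> S. \<Theta> x \<in> RP1 - {proj_inf}} = {x \<in> S. \<Theta> x \<noteq> proj_inf}"
    using assms unfolding continuous_map_def topspace_RP1 by auto
  ultimately show ?thesis by simp
qed

lemma cont_T2:
  assumes "continuous_map (top_of_set S) RP1_top \<Theta>" "\<forall>x\<in>S. \<Theta> x \<noteq> proj_inf"
  shows "continuous_on S (\<lambda>x. ratio (\<Theta> x))"
proof -
  have inR: "\<forall>x\<in>S. \<Theta> x \<in> RP1" using assms(1) unfolding continuous_map_def topspace_RP1 by auto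
  have "continuous_map (top_of_set S) euclidean (\<lambda>x. ratio (\<Theta> x))"
    unfolding continuous_map_def
  proof (intro conjI allI impI)
    show "(\<lambda>x. ratio (\<Theta> x)) \<in> topspace (top_of_set S) \<rightarrow> topspace euclidean" by simp
    fix B :: "real set" assume "openin euclidean B"
    then have B: "open B" by simp
    define U where "U = {proj_class (r,1) | r. r \<in> B}"
    have "{p. p \<noteq> (0, 0) \<and> proj_class p \<in> U} = {p. snd p \<noteq> 0} \<inter> (\<lambda>p. fst p / snd p) -` B"
    proof (rule set_eqI, rule iffI)
      fix p assume "p \<in> {p. p \<noteq> (0, 0) \<and> proj_class p \<in> U}"
      then obtain a b r where p: "p = (a,b)" "(a,b) \<noteq> (0,0)" "proj_class (a,b) = proj_class (r,1)" "r \<in> B"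
        unfolding U_def by (cases p) auto
      have "b \<noteq> 0"
      proof
        assume "b = 0"
        then have "proj_class (a,b) = proj_inf" using proj_inf_iff[of a b] p(2) by simp
        then show False using p(3) proj_r1_ne_inf[of r] by simp
      qed
      then have "proj_class (r,1) = proj_class (a/b,1)" using p(3) proj_norm[of b a] by argo
      then have "r = a/b" by (rule proj_r1_inj)
      then show "p \<in> {p. snd p \<noteq> 0} \<inter> (\<lambda>p. fst p / snd p) -` B" using p \<open>b \<noteq> 0\<close> by simp
    next
      fix p assume "p \<in> {p. snd p \<noteq> 0} \<inter> (\<lambda>p. fst p / snd p) -` B"
      then obtain a b where p: "p = (a,b)" "b \<noteq> 0" "a/b \<in> B" by (cases p) auto
      then have "proj_class p = proj_class (a/b,1)" using proj_norm[of b a] by argo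
      then show "p \<in> {p. p \<noteq> (0, 0) \<and> proj_class p \<in> U}" unfolding U_def using p by auto
    qed
    moreover have "open ({p. snd p \<noteq> 0} \<inter> (\<lambda>p::real\<times>real. fst p / snd p) -` B)"
    proof -
      have "continuous_on {p::real\<times>real. snd p \<noteq> 0} (\<lambda>p. fst p / snd p)"
        by (intro continuous_intros) auto
      then have "open ((\<lambda>p::real\<times>real. fst p / snd p) -` B \<inter> {p. snd p \<noteq> 0})"
        using continuous_on_open_vimage[OF open_snd_ne] B by blast
      then show ?thesis by (simp add: Int_commute)
    qed
    moreover have "U \<subseteq> RP1" unfolding U_def using proj_in_RP1 by auto
    ultimately have "openin RP1_top U" unfolding openin_RP1 by simp
    then have "openin (top_of_set S) {x \<in> S. \<Theta> x \<in> U}"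
      using assms unfolding continuous_map_def by auto
    moreover have "{x \<in> S. \<Theta> x \<in> U} = {x \<in> S. ratio (\<Theta> x) \<in> B}"
    proof (rule set_eqI, rule iffI)
      fix x assume "x \<in> {x \<in> S. \<Theta> x \<in> U}"
      then obtain r where "x \<in> S" "\<Theta> x = proj_class (r,1)" "r \<in> B" unfolding U_def by auto
      then show "x \<in> {x \<in> S. ratio (\<Theta> x) \<in> B}" using ratio_eq by simp
    next
      fix x assume "x \<in> {x \<in> S. ratio (\<Theta> x) \<in> B}"
      then have "x \<in> S" "ratio (\<Theta> x) \<in> B" by auto
      moreover have "\<Theta> x = proj_class (ratio (\<Theta> x), 1)" using RP1_cases inR assms(2) \<open>x \<in> S\<close> by blast
      ultimately show "x \<in> {x \<in> S. \<Theta> x \<in> U}" unfolding U_def by blast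
    qed
    ultimately show "openin (top_of_set S) {x \<in> topspace (top_of_set S). ratio (\<Theta> x) \<in> B}" by simp
  qed
  then show ?thesis by simp
qed



lemma inf_lemma: "x \<in> S \<Longrightarrow> (x, proj_inf) \<in> Z_RP1 c S \<longleftrightarrow> c (deg_xn c) x = 0"
  unfolding proj_inf_def using ZRP1_iff[of x S 1 0 c] bf_inf[of c x 1] by simp

lemma r1_lemma: "x \<in> S \<Longrightarrow> (x, proj_class (r,1)) \<in> Z_RP1 c S \<longleftrightarrow> poly (evalP c x) r = 0"
  using ZRP1_iff[of x S r 1 c] bf_r1[of c x r] by simp

lemma fin_lemma:
  assumes "(x,P) \<in> Z_RP1 c S" "P \<noteq> proj_inf"
  shows "x \<in> S" "P = proj_class (ratio P, 1)" "poly (evalP c x) (ratio P) = 0"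
proof -
  from ZRP1_D[OF assms(1)] obtain a b where ab: "x \<in> S" "(a,b) \<noteq> (0,0)" "P = proj_class (a,b)" by blast
  then show "x \<in> S" by simp
  have "P \<in> RP1" using ab proj_in_RP1 by simp
  then show P: "P = proj_class (ratio P, 1)" using RP1_cases assms(2) by simp
  show "poly (evalP c x) (ratio P) = 0" using r1_lemma[of x S "ratio P" c] ab(1) assms(1) P by simp
qed

lemma ZR_iff: "(x,t) \<in> Z_R c S \<longleftrightarrow> x \<in> S \<and> poly (evalP c x) t = 0"
  unfolding Z_R_def by simp

lemma part1a:
  assumes H: "\<forall>x\<in>S. c (deg_xn c) x \<noteq> 0" and D: "delineable c S"
  shows "proj_delineable c S"
proof -
  obtain k :: nat and \<theta> where cont: "\<forall>l<k. continuous_on S (\<theta> l)"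
    and Z: "Z_R c S = {(x, \<theta> l x) | x l. x \<in> S \<and> l < k}"
    and dist: "\<forall>x\<in>S. \<forall>i<k. \<forall>j<k. i \<noteq> j \<longrightarrow> \<theta> i x \<noteq> \<theta> j x"
    and mult: "\<forall>l<k. \<exists>m\<ge>1. \<forall>x\<in>S. root_mult (evalP c x) (\<theta> l x) m"
    using D unfolding delineable_def by (elim exE conjE) iprover
  define \<Theta> where "\<Theta> l x = proj_class (\<theta> l x, 1)" for l x
  show ?thesis unfolding proj_delineable_def
  proof (rule exI[of _ k], rule exI[of _ \<Theta>], intro conjI)
    show "\<forall>l<k. continuous_map (top_of_set S) RP1_top (\<Theta> l)"
      unfolding \<Theta>_def using cont cont_T1 by blast
    show "Z_RP1 c S = {(x, \<Theta> l x) | x l. x \<in> S \<and> l < k}"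
    proof (rule set_eqI, rule iffI)
      fix p assume p: "p \<in> Z_RP1 c S"
      obtain x P where xP: "p = (x,P)" by (cases p)
      have xS: "x \<in> S" using ZRP1_D[of x P c S] p xP by simp
      have "P \<noteq> proj_inf" using inf_lemma[of x S c] H xS p xP by auto
      note F = fin_lemma[OF p[unfolded xP] this]
      have "(x, ratio P) \<in> Z_R c S" using F xS ZR_iff by blast
      then obtain l where "l < k" "ratio P = \<theta> l x" using Z by auto
      then show "p \<in> {(x, \<Theta> l x) | x l. x \<in> S \<and> l < k}"
        using F xP xS unfolding \<Theta>_def by auto
    next
      fix p assume "p \<in> {(x, \<Theta> l x) | x l. x \<in> S \<and> l < k}"
      then obtain x l where p: "p = (x, \<Theta> l x)" "x \<in> S" "l < k" by blast
      then have "(x, \<theta> l x) \<in> Z_R c S" using Z by blast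
      then have "poly (evalP c x) (\<theta> l x) = 0" using ZR_iff[of x "\<theta> l x" c S] by simp
      then show "p \<in> Z_RP1 c S" using r1_lemma[of x S "\<theta> l x" c] p unfolding \<Theta>_def by simp
    qed
    show "\<forall>x\<in>S. \<forall>i<k. \<forall>j<k. i \<noteq> j \<longrightarrow> \<Theta> i x \<noteq> \<Theta> j x"
    proof (intro ballI allI impI)
      fix x i j assume a: "x \<in> S" "i < k" "j < k" "i \<noteq> j"
      show "\<Theta> i x \<noteq> \<Theta> j x" unfolding \<Theta>_def
      proof
        assume "proj_class (\<theta> i x, 1) = proj_class (\<theta> j x, 1)"
        then have "\<theta> i x = \<theta> j x" by (rule proj_r1_inj)
        then show False using dist a by blast
      qed
    qed
    show "\<forall>l<k. \<exists>m\<ge>1. \<forall>x\<in>S. proj_root_mult (homog c x) (\<Theta> l x) m"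
    proof (intro allI impI)
      fix l assume l: "l < k"
      then obtain m where m: "m \<ge> 1" "\<forall>x\<in>S. root_mult (evalP c x) (\<theta> l x) m" using mult by blast
      have "\<forall>x\<in>S. proj_root_mult (homog c x) (\<Theta> l x) m"
      proof
        fix x assume "x \<in> S"
        then show "proj_root_mult (homog c x) (\<Theta> l x) m"
          unfolding \<Theta>_def using mult_iff[OF m(1), of c x "\<theta> l x"] m(2) by simp
      qed
      then show "\<exists>m\<ge>1. \<forall>x\<in>S. proj_root_mult (homog c x) (\<Theta> l x) m" using m(1) by blast
    qed
  qed
qed

lemma part1b:
  assumes H: "\<forall>x\<in>S. c (deg_xn c) x \<noteq> 0" and D: "proj_delineable c S"
  shows "delineable c S"
proof -
  obtain k :: nat and \<Theta> where cont: "\<forall>l<k. continuous_map (top_of_set S) RP1_top (\<Theta> l)"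
    and Z: "Z_RP1 c S = {(x, \<Theta> l x) | x l. x \<in> S \<and> l < k}"
    and dist: "\<forall>x\<in>S. \<forall>i<k. \<forall>j<k. i \<noteq> j \<longrightarrow> \<Theta> i x \<noteq> \<Theta> j x"
    and mult: "\<forall>l<k. \<exists>m\<ge>1. \<forall>x\<in>S. proj_root_mult (homog c x) (\<Theta> l x) m"
    using D unfolding proj_delineable_def by (elim exE conjE) iprover
  have inZ: "(x, \<Theta> l x) \<in> Z_RP1 c S" if "x \<in> S" "l < k" for x l using Z that by blast
  have ninf: "\<Theta> l x \<noteq> proj_inf" if "x \<in> S" "l < k" for x l
    using inZ[OF that] inf_lemma[of x S c] H that by auto
  define \<theta> where "\<theta> l x = ratio (\<Theta> l x)" for l x
  have rep: "\<Theta> l x = proj_class (\<theta> l x, 1)" "poly (evalP c x) (\<theta> l x) = 0" if "x \<in> S" "l < k" for x l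
    using fin_lemma[OF inZ[OF that] ninf[OF that]] unfolding \<theta>_def by auto
  show ?thesis unfolding delineable_def
  proof (rule exI[of _ k], rule exI[of _ \<theta>], intro conjI)
    show "\<forall>l<k. continuous_on S (\<theta> l)"
      unfolding \<theta>_def using cont cont_T2 ninf by blast
    show "Z_R c S = {(x, \<theta> l x) | x l. x \<in> S \<and> l < k}"
    proof (rule set_eqI, rule iffI)
      fix p assume p: "p \<in> Z_R c S"
      obtain x t where xt: "p = (x,t)" by (cases p)
      have xS: "x \<in> S" and pt: "poly (evalP c x) t = 0" using p xt ZR_iff by auto
      then have "(x, proj_class (t,1)) \<in> Z_RP1 c S" using r1_lemma by blast
      then obtain l where l: "l < k" "proj_class (t,1) = \<Theta> l x" using Z by auto
      then have "t = \<theta> l x" using rep(1)[OF xS l(1)] proj_r1_inj by simp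
      then show "p \<in> {(x, \<theta> l x) | x l. x \<in> S \<and> l < k}" using xt xS l by auto
    next
      fix p assume "p \<in> {(x, \<theta> l x) | x l. x \<in> S \<and> l < k}"
      then obtain x l where p: "p = (x, \<theta> l x)" "x \<in> S" "l < k" by blast
      then show "p \<in> Z_R c S" using rep(2) ZR_iff by blast
    qed
    show "\<forall>x\<in>S. \<forall>i<k. \<forall>j<k. i \<noteq> j \<longrightarrow> \<theta> i x \<noteq> \<theta> j x"
    proof (intro ballI allI impI)
      fix x i j assume a: "x \<in> S" "i < k" "j < k" "i \<noteq> j"
      then have "\<Theta> i x \<noteq> \<Theta> j x" using dist by blast
      then show "\<theta> i x \<noteq> \<theta> j x" using rep(1)[of x i] rep(1)[of x j] a by auto
    qed
    show "\<forall>l<k. \<exists>m\<ge>1. \<forall>x\<in>S. root_mult (evalP c x) (\<theta> l x) m"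
    proof (intro allI impI)
      fix l assume l: "l < k"
      then obtain m where m: "m \<ge> 1" "\<forall>x\<in>S. proj_root_mult (homog c x) (\<Theta> l x) m" using mult by blast
      have "\<forall>x\<in>S. root_mult (evalP c x) (\<theta> l x) m"
      proof
        fix x assume x: "x \<in> S"
        then have "proj_root_mult (homog c x) (proj_class (\<theta> l x, 1)) m"
          using m(2)[rule_format, OF x] rep(1)[OF x l] by simp
        then show "root_mult (evalP c x) (\<theta> l x) m"
          using mult_iff[OF m(1), of c x "\<theta> l x"] by simp
      qed
      then show "\<exists>m\<ge>1. \<forall>x\<in>S. root_mult (evalP c x) (\<theta> l x) m" using m(1) by blast
    qed
  qed
qed



lemma part2:
  assumes conn: "connected S" and H0: "\<forall>x\<in>S. c (deg_xn c) x = 0" and D: "proj_delineable c S"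
  shows "delineable c S"
proof (cases "S = {}")
  case True
  have "Z_R c S = {}" unfolding Z_R_def True by simp
  then show ?thesis unfolding delineable_def
    by (intro exI[of _ "0::nat"] exI[of _ "\<lambda>_ _. 0::real"]) (simp add: True)
next
  case False
  then obtain x0 where x0: "x0 \<in> S" by blast
  obtain k :: nat and \<Theta> where cont: "\<forall>l<k. continuous_map (top_of_set S) RP1_top (\<Theta> l)"
    and Z: "Z_RP1 c S = {(x, \<Theta> l x) | x l. x \<in> S \<and> l < k}"
    and dist: "\<forall>x\<in>S. \<forall>i<k. \<forall>j<k. i \<noteq> j \<longrightarrow> \<Theta> i x \<noteq> \<Theta> j x"
    and mult: "\<forall>l<k. \<exists>m\<ge>1. \<forall>x\<in>S. proj_root_mult (homog c x) (\<Theta> l x) m"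
    using D unfolding proj_delineable_def by (elim exE conjE) iprover
  have inZ: "(x, \<Theta> l x) \<in> Z_RP1 c S" if "x \<in> S" "l < k" for x l using Z that by blast
  have exinf: "\<exists>l<k. \<Theta> l x = proj_inf" if x: "x \<in> S" for x
  proof -
    have "(x, proj_inf) \<in> Z_RP1 c S" using inf_lemma[of x S c] H0 x by simp
    then show ?thesis using Z by auto
  qed
  define A where "A l = {x \<in> S. \<Theta> l x = proj_inf}" for l
  have clopen: "A l = {} \<or> A l = S" if l: "l < k" for l
  proof -
    have o1: "openin (top_of_set S) {x \<in> S. \<Theta> j x \<noteq> proj_inf}" if "j < k" for j
      using cont_T3 cont that by blast
    have eq: "A l = (\<Inter>j \<in> {..<k} - {l}. {x \<in> S. \<Theta> j x \<noteq> proj_inf}) \<inter> S"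
    proof (rule set_eqI, rule iffI)
      fix x assume "x \<in> A l"
      then have x: "x \<in> S" "\<Theta> l x = proj_inf" unfolding A_def by auto
      have "\<Theta> j x \<noteq> proj_inf" if "j \<in> {..<k} - {l}" for j
      proof -
        have "\<Theta> j x \<noteq> \<Theta> l x" using dist x(1) l that by blast
        then show ?thesis using x(2) by simp
      qed
      then show "x \<in> (\<Inter>j \<in> {..<k} - {l}. {x \<in> S. \<Theta> j x \<noteq> proj_inf}) \<inter> S"
        using x by auto
    next
      fix x assume a: "x \<in> (\<Inter>j \<in> {..<k} - {l}. {x \<in> S. \<Theta> j x \<noteq> proj_inf}) \<inter> S"
      then have x: "x \<in> S" by blast
      obtain j where j: "j < k" "\<Theta> j x = proj_inf" using exinf[OF x] by blast
      have "j = l" using a j by auto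
      then show "x \<in> A l" unfolding A_def using x j by simp
    qed
    have "openin (top_of_set S) (A l)"
      unfolding eq using openin_INT[of "{..<k} - {l}" "top_of_set S" "\<lambda>j. {x \<in> S. \<Theta> j x \<noteq> proj_inf}"] o1
      by simp
    moreover have "closedin (top_of_set S) (A l)"
    proof -
      have "S - A l = {x \<in> S. \<Theta> l x \<noteq> proj_inf}" unfolding A_def by auto
      then show ?thesis unfolding closedin_def using o1[OF l] unfolding A_def by auto
    qed
    ultimately show ?thesis using conn unfolding connected_clopen by blast
  qed
  obtain l0 where l0: "l0 < k" "\<Theta> l0 x0 = proj_inf" using exinf[OF x0] by blast
  have allinf: "\<forall>x\<in>S. \<Theta> l0 x = proj_inf"
  proof -
    have "A l0 \<noteq> {}" using x0 l0 unfolding A_def by auto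
    then have "A l0 = S" using clopen[OF l0(1)] by blast
    then show ?thesis unfolding A_def by auto
  qed
  have ninf: "\<Theta> l x \<noteq> proj_inf" if "x \<in> S" "l < k" "l \<noteq> l0" for x l
    using dist allinf that l0(1) by metis
  define idx where "idx j = (if j < l0 then j else Suc j)" for j :: nat
  have idx1: "idx j < k" "idx j \<noteq> l0" if "j < k - 1" for j
    using that l0(1) unfolding idx_def by auto
  have idx_inj: "idx i = idx j \<Longrightarrow> i = j" for i j
    unfolding idx_def by (auto split: if_splits)
  have idx_surj: "\<exists>j<k-1. idx j = l" if "l < k" "l \<noteq> l0" for l
  proof (cases "l < l0")
    case True then show ?thesis using that l0(1) unfolding idx_def by (intro exI[of _ l]) auto
  next
    case False then show ?thesis using that l0(1) unfolding idx_def by (intro exI[of _ "l - 1"]) auto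
  qed
  define \<theta> where "\<theta> j x = ratio (\<Theta> (idx j) x)" for j x
  have rep: "\<Theta> (idx j) x = proj_class (\<theta> j x, 1)" "poly (evalP c x) (\<theta> j x) = 0"
    if "x \<in> S" "j < k - 1" for x j
    using fin_lemma[OF inZ[OF that(1) idx1(1)[OF that(2)]] ninf[OF that(1) idx1[OF that(2)]]]
    unfolding \<theta>_def by auto
  show ?thesis unfolding delineable_def
  proof (rule exI[of _ "k - 1"], rule exI[of _ \<theta>], intro conjI)
    show "\<forall>l<k-1. continuous_on S (\<theta> l)"
    proof (intro allI impI)
      fix j assume j: "j < k - 1"
      show "continuous_on S (\<theta> j)" unfolding \<theta>_def
        using cont_T2[of S "\<Theta> (idx j)"] cont idx1[OF j] ninf by blast
    qed
    show "Z_R c S = {(x, \<theta> l x) | x l. x \<in> S \<and> l < k - 1}"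
    proof (rule set_eqI, rule iffI)
      fix p assume p: "p \<in> Z_R c S"
      obtain x t where xt: "p = (x,t)" by (cases p)
      have xS: "x \<in> S" and pt: "poly (evalP c x) t = 0" using p xt ZR_iff by auto
      then have "(x, proj_class (t,1)) \<in> Z_RP1 c S" using r1_lemma by blast
      then obtain l where l: "l < k" "proj_class (t,1) = \<Theta> l x" using Z by auto
      have "l \<noteq> l0" using l allinf xS proj_r1_ne_inf by metis
      then obtain j where j: "j < k - 1" "idx j = l" using idx_surj l(1) by blast
      have "t = \<theta> j x" using rep(1)[OF xS j(1)] l(2) j(2) proj_r1_inj by simp
      then show "p \<in> {(x, \<theta> l x) | x l. x \<in> S \<and> l < k - 1}" using xt xS j by auto
    next
      fix p assume "p \<in> {(x, \<theta> l x) | x l. x \<in> S \<and> l < k - 1}"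
      then obtain x l where p: "p = (x, \<theta> l x)" "x \<in> S" "l < k - 1" by blast
      then show "p \<in> Z_R c S" using rep(2) ZR_iff by blast
    qed
    show "\<forall>x\<in>S. \<forall>i<k-1. \<forall>j<k-1. i \<noteq> j \<longrightarrow> \<theta> i x \<noteq> \<theta> j x"
    proof (intro ballI allI impI)
      fix x i j assume a: "x \<in> S" "i < k - 1" "j < k - 1" "i \<noteq> j"
      then have "idx i \<noteq> idx j" using idx_inj by blast
      then have "\<Theta> (idx i) x \<noteq> \<Theta> (idx j) x" using dist a idx1 by blast
      then show "\<theta> i x \<noteq> \<theta> j x" using rep(1)[of x i] rep(1)[of x j] a by auto
    qed
    show "\<forall>l<k-1. \<exists>m\<ge>1. \<forall>x\<in>S. root_mult (evalP c x) (\<theta> l x) m"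
    proof (intro allI impI)
      fix l assume l: "l < k - 1"
      then obtain m where m: "m \<ge> 1" "\<forall>x\<in>S. proj_root_mult (homog c x) (\<Theta> (idx l) x) m"
        using mult idx1 by blast
      have "\<forall>x\<in>S. root_mult (evalP c x) (\<theta> l x) m"
      proof
        fix x assume x: "x \<in> S"
        then have "proj_root_mult (homog c x) (proj_class (\<theta> l x, 1)) m"
          using m(2)[rule_format, OF x] rep(1)[OF x l] by simp
        then show "root_mult (evalP c x) (\<theta> l x) m"
          using mult_iff[OF m(1), of c x "\<theta> l x"] by simp
      qed
      then show "\<exists>m\<ge>1. \<forall>x\<in>S. root_mult (evalP c x) (\<theta> l x) m" using m(1) by blast
    qed
  qed
qed


theorem mainTheorem6:
  fixes c :: "nat \<Rightarrow> real^'m \<Rightarrow> real" and S :: "(real^'m) set"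
  assumes "is_poly_xn c"
  shows "((\<forall>x\<in>S. c (deg_xn c) x \<noteq> 0) \<longrightarrow> (proj_delineable c S \<longleftrightarrow> delineable c S))
       \<and> ((connected S \<and> (\<forall>x\<in>S. c (deg_xn c) x = 0) \<and> proj_delineable c S) \<longrightarrow> delineable c S)"
proof (intro conjI impI iffI)
  assume "\<forall>x\<in>S. c (deg_xn c) x \<noteq> 0"
  note h = this
  { assume "proj_delineable c S" then show "delineable c S" using part1b[where S=S and c=c] h by blast }
  { assume "delineable c S" then show "proj_delineable c S" using part1a[where S=S and c=c] h by blast }
next
  assume "connected S \<and> (\<forall>x\<in>S. c (deg_xn c) x = 0) \<and> proj_delineable c S"
  then show "delineable c S" using part2[where S=S and c=c] by blast
qed

end
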